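(* Let $k$ be a field, $R=k[x_1,\ldots,x_n]$ with $n\ge2$, and let $I$ be an almost reverse lexicographic ideal whose last generator is $x_{n-1}^t$ for some $t>0$ (so $f_{n-1}(0)=t$). Let \[T=\{(\alpha_1,\ldots,\alpha_{n-2},\beta)\in\mathbb{Z}^{n-1}_{\ge0}: \alpha=(\alpha_1,\ldots,\alpha_{n-2})\in\mathcal{I}_{n-2},\ 0\le\beta<f_{n-1}(\alpha)\}.\] Let $s$ be a positive integer with $s\le|T|$, and let $A_1>A_2>\cdots>A_s$ be the $s$ largest elements of $T$ (so $A_s>B$ for every $B\in T\setminus\{A_1,\ldots,A_s\}$). Let $g:\{A_1,\ldots,A_s\}\to\mathbb{Z}_{>0}$ satisfy $t\le|A_i|+g(A_i)\le|A_j|+g(A_j)$ whenever $A_i>A_j$. Let $J$ be the ideal generated by $\mathcal{S}=\mathcal{G}(I)\cup\{x^{A_i}x_n^{g(A_i)}:1\le i\le s\}$. Then $J$ is almost reverse lexicographic and $\mathcal{G}(J)=\mathcal{S}$.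
   Context: Degree reverse lexicographic order: for $M=x^\alpha,N=x^\beta$, $M>N$ iff $\deg M>\deg N$, or degrees are equal and for the largest $s$ with $\alpha_s\neq\beta_s$ one has $\alpha_s<\beta_s$. For $\alpha\in\mathbb{Z}^s_{\ge0}$, $x^\alpha=x_1^{\alpha_1}\cdots x_s^{\alpha_s}$, $|\alpha|=\sum\alpha_j$, and $\alpha\le\beta$ iff $x^\alpha\le x^\beta$. Almost reverse lexicographic: for every monomial $M$ and every minimal monomial generator $N$ of $I$ with $\deg M=\deg N$ and $M>N$, $M\in I$. $\mathcal{G}(I)$ is the minimal monomial generating set. The last generator of $I$ is the element of $\mathcal{G}(I)$ of maximal degree that is smallest in the order among elements of $\mathcal{G}(I)$ of that degree. $f_1=\min\{t:x_1^t\in I\}$; for $i\ge2$, $\alpha\in\mathbb{Z}^{i-1}_{\ge0}$, $f_i(\alpha)=\min\{t\ge0:x^\alpha x_i^t\in I\}$. $\mathcal{I}_{n-2}=\{(\alpha_1,\ldots,\alpha_{n-2})\in\mathbb{Z}^{n-2}_{\ge0}: 0\le\alpha_1<f_1,\ 0\le\alpha_j<f_j(\alpha_1,\ldots,\alpha_{j-1})\ (2\le j\le n-2)\}$; for $n=2$ it consists of the empty tuple and $f_1$ of the empty tuple is $f_1$. *)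

theory Defs
  imports Main
begin

text \<open>Monomials of k[x_1,...,x_n] are represented by exponent vectors
  nat => nat supported on {1..n}.  A monomial ideal is represented by the set
  of exponent vectors of the monomials it contains (the field k plays no role).\<close>

definition mons :: "nat \<Rightarrow> (nat \<Rightarrow> nat) set" where
  "mons n = {a. \<forall>j. (j < 1 \<or> n < j) \<longrightarrow> a j = 0}"

definition mdeg :: "nat \<Rightarrow> (nat \<Rightarrow> nat) \<Rightarrow> nat" where
  "mdeg n a = (\<Sum>j\<in>{1..n}. a j)"

definition unitv :: "nat \<Rightarrow> nat \<Rightarrow> nat" where
  "unitv i = (\<lambda>j. if j = i then 1 else 0)"

definition mdvd :: "(nat \<Rightarrow> nat) \<Rightarrow> (nat \<Rightarrow> nat) \<Rightarrow> bool" where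
  "mdvd a b \<longleftrightarrow> (\<forall>j. a j \<le> b j)"

text \<open>Degree reverse lexicographic order: revlex_less n b a means x^b < x^a.\<close>
definition revlex_less :: "nat \<Rightarrow> (nat \<Rightarrow> nat) \<Rightarrow> (nat \<Rightarrow> nat) \<Rightarrow> bool" where
  "revlex_less n b a \<longleftrightarrow>
     mdeg n b < mdeg n a \<or>
     (mdeg n b = mdeg n a \<and>
      (\<exists>s\<in>{1..n}. a s \<noteq> b s \<and> (\<forall>r\<in>{1..n}. s < r \<longrightarrow> a r = b r) \<and> a s < b s))"

definition is_monomial_ideal :: "nat \<Rightarrow> (nat \<Rightarrow> nat) set \<Rightarrow> bool" where
  "is_monomial_ideal n I \<longleftrightarrow> I \<subseteq> mons n \<and>
     (\<forall>a\<in>I. \<forall>b\<in>mons n. mdvd a b \<longrightarrow> b \<in> I)"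

definition mideal_gen :: "nat \<Rightarrow> (nat \<Rightarrow> nat) set \<Rightarrow> (nat \<Rightarrow> nat) set" where
  "mideal_gen n S = {b\<in>mons n. \<exists>a\<in>S. mdvd a b}"

definition mingens :: "(nat \<Rightarrow> nat) set \<Rightarrow> (nat \<Rightarrow> nat) set" where
  "mingens I = {a\<in>I. \<forall>b\<in>I. mdvd b a \<longrightarrow> b = a}"

definition almost_revlex :: "nat \<Rightarrow> (nat \<Rightarrow> nat) set \<Rightarrow> bool" where
  "almost_revlex n I \<longleftrightarrow>
     (\<forall>M\<in>mons n. \<forall>N\<in>mingens I. mdeg n M = mdeg n N \<and> revlex_less n N M \<longrightarrow> M \<in> I)"

definition is_last_gen :: "nat \<Rightarrow> (nat \<Rightarrow> nat) set \<Rightarrow> (nat \<Rightarrow> nat) \<Rightarrow> bool" where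
  "is_last_gen n I L \<longleftrightarrow> L \<in> mingens I \<and>
     (\<forall>N\<in>mingens I. mdeg n N \<le> mdeg n L) \<and>
     (\<forall>N\<in>mingens I. mdeg n N = mdeg n L \<longrightarrow> N = L \<or> revlex_less n L N)"

text \<open>f_i(alpha) = min{t. x^alpha x_i^t in I}, alpha in Z^{i-1} (only entries
  1..i-1 of alpha are used); for i = 1 this is f_1.\<close>
definition fI :: "(nat \<Rightarrow> nat) set \<Rightarrow> nat \<Rightarrow> (nat \<Rightarrow> nat) \<Rightarrow> nat" where
  "fI I i a = (LEAST t. (\<lambda>j. if 1 \<le> j \<and> j < i then a j else if j = i then t else 0) \<in> I)"

definition Iset :: "(nat \<Rightarrow> nat) set \<Rightarrow> nat \<Rightarrow> (nat \<Rightarrow> nat) set" where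
  "Iset I m = {a. (\<forall>j. (j < 1 \<or> m < j) \<longrightarrow> a j = 0) \<and> (\<forall>j\<in>{1..m}. a j < fI I j a)}"

definition Tset :: "(nat \<Rightarrow> nat) set \<Rightarrow> nat \<Rightarrow> (nat \<Rightarrow> nat) set" where
  "Tset I n = {c. \<exists>a\<in>Iset I (n - 2). \<exists>b. b < fI I (n - 1) a \<and> c = a(n - 1 := b)}"

end

theory Submission
  imports Defs
begin


lemma mdvd_refl: "mdvd a a" by (simp add: mdvd_def)
lemma mdvd_trans: "mdvd a b \<Longrightarrow> mdvd b c \<Longrightarrow> mdvd a c"
  unfolding mdvd_def using le_trans by blast
lemma mdvd_antisym: "mdvd a b \<Longrightarrow> mdvd b a \<Longrightarrow> a = b"
  unfolding mdvd_def by (rule ext) (meson antisym)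

lemma mdeg_less:
  assumes "a \<in> mons n" "b \<in> mons n" "mdvd b a" "b \<noteq> a"
  shows "mdeg n b < mdeg n a"
proof -
  obtain j where j: "b j \<noteq> a j" using assms(4) by blast
  have "j \<in> {1..n}"
  proof (rule ccontr)
    assume "j \<notin> {1..n}"
    then have "j < 1 \<or> n < j" by auto
    then show False using j assms(1,2) unfolding mons_def by auto
  qed
  moreover have "b j < a j" using j assms(3) unfolding mdvd_def by (metis le_neq_implies_less)
  ultimately show ?thesis unfolding mdeg_def
    using assms(3) unfolding mdvd_def by (intro sum_strict_mono_ex1) auto
qed

lemma revlex_irrefl: "\<not> revlex_less n a a"
  unfolding revlex_less_def by auto

lemma revlex_trans:
  assumes "revlex_less n c b" "revlex_less n b a"
  shows "revlex_less n c a"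
proof (cases "mdeg n c < mdeg n b \<or> mdeg n b < mdeg n a")
  case True
  then show ?thesis using assms unfolding revlex_less_def by auto
next
  case False
  then have d: "mdeg n c = mdeg n b" "mdeg n b = mdeg n a" using assms unfolding revlex_less_def by auto
  obtain s1 where s1: "s1 \<in> {1..n}" "b s1 \<noteq> c s1" "\<forall>r\<in>{1..n}. s1 < r \<longrightarrow> b r = c r" "b s1 < c s1"
    using assms(1) d unfolding revlex_less_def by auto
  obtain s2 where s2: "s2 \<in> {1..n}" "a s2 \<noteq> b s2" "\<forall>r\<in>{1..n}. s2 < r \<longrightarrow> a r = b r" "a s2 < b s2"
    using assms(2) d unfolding revlex_less_def by auto
  show ?thesis
  proof (cases "s1 \<le> s2")
    case True
    have "a s2 < c s2" using s2 s1 True by (metis le_neq_implies_less less_trans)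
    moreover have "\<forall>r\<in>{1..n}. s2 < r \<longrightarrow> a r = c r" using s1(3) s2(3) True by auto
    ultimately show ?thesis unfolding revlex_less_def using d s2(1)
      by (intro disjI2 conjI bexI[of _ s2]) auto
  next
    case False
    have "a s1 < c s1" using s2 s1 False by auto
    moreover have "\<forall>r\<in>{1..n}. s1 < r \<longrightarrow> a r = c r" using s1(3) s2(3) False by auto
    ultimately show ?thesis unfolding revlex_less_def using d s1(1)
      by (intro disjI2 conjI bexI[of _ s1]) auto
  qed
qed

lemma ideal_mingens:
  assumes "is_monomial_ideal n I" "a \<in> I"
  shows "\<exists>b\<in>mingens I. mdvd b a"
  using assms(2)
proof (induction "mdeg n a" arbitrary: a rule: less_induct)
  case less
  show ?case
  proof (cases "a \<in> mingens I")
    case True then show ?thesis using mdvd_refl by blast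
  next
    case False
    then obtain b where b: "b \<in> I" "mdvd b a" "b \<noteq> a" using less.prems unfolding mingens_def by auto
    have "mdeg n b < mdeg n a" using mdeg_less[of a n b] b less.prems assms(1)
      unfolding is_monomial_ideal_def by auto
    then obtain c where "c \<in> mingens I" "mdvd c b" using less.hyps b by blast
    then show ?thesis using b mdvd_trans by blast
  qed
qed

lemma mingens_gen:
  assumes "S \<subseteq> mons n" "\<forall>a\<in>S. \<forall>b\<in>S. mdvd b a \<longrightarrow> b = a"
  shows "mingens (mideal_gen n S) = S"
proof
  show "mingens (mideal_gen n S) \<subseteq> S"
  proof
    fix b assume "b \<in> mingens (mideal_gen n S)"
    then have b: "b \<in> mideal_gen n S" "\<forall>c\<in>mideal_gen n S. mdvd c b \<longrightarrow> c = b" unfolding mingens_def by auto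
    then obtain a where a: "a \<in> S" "mdvd a b" unfolding mideal_gen_def by auto
    have "a \<in> mideal_gen n S" using a assms(1) mdvd_refl unfolding mideal_gen_def by auto
    then show "b \<in> S" using b a by auto
  qed
next
  show "S \<subseteq> mingens (mideal_gen n S)"
  proof
    fix a assume a: "a \<in> S"
    have aJ: "a \<in> mideal_gen n S" using a assms(1) mdvd_refl unfolding mideal_gen_def by auto
    have "\<forall>b\<in>mideal_gen n S. mdvd b a \<longrightarrow> b = a"
    proof (intro ballI impI)
      fix b assume b: "b \<in> mideal_gen n S" "mdvd b a"
      then obtain c where c: "c \<in> S" "mdvd c b" unfolding mideal_gen_def by auto
      then have "c = a" using assms(2) a b mdvd_trans by blast
      then show "b = a" using c b mdvd_antisym by blast
    qed
    then show "a \<in> mingens (mideal_gen n S)" using aJ unfolding mingens_def by auto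
  qed
qed

lemma mdeg_add_unit:
  assumes "1 \<le> n"
  shows "mdeg n (\<lambda>j. C j + c * unitv n j) = mdeg n C + c"
proof -
  have "(\<Sum>j\<in>{1..n}. c * unitv n j) = (\<Sum>j\<in>{1..n}. if j = n then c else 0)"
    by (rule sum.cong) (auto simp: unitv_def)
  also have "\<dots> = c" using assms by (simp add: sum.delta)
  finally show ?thesis unfolding mdeg_def by (simp add: sum.distrib)
qed

lemma mdeg_unit:
  assumes "j \<in> {1..n}"
  shows "mdeg n (\<lambda>k. t * unitv j k) = t"
proof -
  have "(\<Sum>k\<in>{1..n}. t * unitv j k) = (\<Sum>k\<in>{1..n}. if k = j then t else 0)"
    by (rule sum.cong) (auto simp: unitv_def)
  also have "\<dots> = t" using assms by (simp add: sum.delta')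
  finally show ?thesis unfolding mdeg_def .
qed


lemma fI_not:
  assumes "b < fI I j a"
  shows "(\<lambda>k. if 1 \<le> k \<and> k < j then a k else if k = j then b else 0) \<notin> I"
  using not_less_Least[OF assms[unfolded fI_def]] by simp

lemma fI_gt:
  assumes Iid: "is_monomial_ideal n I" and C: "C \<in> mons n" "C \<notin> I" and j: "j \<in> {1..n}"
    and tj: "(\<lambda>k. t * unitv j k) \<in> I" and ag: "\<forall>k. 1 \<le> k \<and> k < j \<longrightarrow> a k = C k"
  shows "C j < fI I j a"
proof (rule ccontr)
  define P where "P = (\<lambda>x k. if 1 \<le> k \<and> k < j then a k else if k = j then x else (0::nat))"
  have Pm: "P x \<in> mons n" for x using j unfolding P_def mons_def by auto
  have "mdvd (\<lambda>k. t * unitv j k) (P t)" unfolding mdvd_def P_def unitv_def by auto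
  then have "P t \<in> I" using Iid tj Pm unfolding is_monomial_ideal_def by blast
  then have "P (fI I j a) \<in> I" unfolding fI_def P_def by (rule LeastI)
  moreover assume "\<not> C j < fI I j a"
  then have "mdvd (P (fI I j a)) C" unfolding mdvd_def P_def using ag by auto
  ultimately have "C \<in> I" using Iid C(1) unfolding is_monomial_ideal_def by blast
  then show False using C(2) by blast
qed


lemma Tprops: assumes n2: "2 \<le> n" and C: "C \<in> Tset I n" shows "C \<in> mons n \<and> C n = 0 \<and> C \<notin> I"
  proof -
    from C[unfolded Tset_def mem_Collect_eq] obtain a where a: "a \<in> Iset I (n - 2)"
      and "\<exists>b. b < fI I (n - 1) a \<and> C = a(n - 1 := b)" by (erule bexE)
    then obtain b where ab2: "b < fI I (n - 1) a" and ab3: "C = a(n - 1 := b)" by blast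
    have asupp: "\<forall>j. (j < 1 \<or> n - 2 < j) \<longrightarrow> a j = 0"
      using a unfolding Iset_def mem_Collect_eq by (rule conjunct1)
    have Ck: "C k = (if 1 \<le> k \<and> k < n - 1 then a k else if k = n - 1 then b else 0)" for k
    proof (cases "k = n - 1")
      case True then show ?thesis using ab3 by simp
    next
      case False
      then have Cka: "C k = a k" using ab3 by simp
      show ?thesis
      proof (cases "1 \<le> k \<and> k < n - 1")
        case True then show ?thesis using Cka by simp
      next
        case F2: False
        then have "k < 1 \<or> n - 2 < k" using False by linarith
        then have "a k = 0" by (rule asupp[rule_format])
        then show ?thesis using Cka F2 False by auto
      qed
    qed
    have eq: "C = (\<lambda>k. if 1 \<le> k \<and> k < n - 1 then a k else if k = n - 1 then b else 0)"
      using Ck by (rule ext)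
    have "C \<notin> I" by (subst eq) (rule fI_not[OF ab2])
    moreover have "C \<in> mons n" unfolding mons_def
    proof (intro CollectI allI impI)
      fix j assume "j < 1 \<or> n < j"
      then show "C j = 0" using Ck[of j] n2 by auto
    qed
    moreover have "C n = 0" using Ck[of n] n2 by auto
    ultimately show ?thesis by auto
  qed

lemma notinT:
  assumes n2: "2 \<le> n" and Iideal: "is_monomial_ideal n I"
    and xjt: "\<And>j. j \<in> {1..n-1} \<Longrightarrow> (\<lambda>k. t * unitv j k) \<in> I"
    and C: "C \<in> mons n" "C n = 0" "C \<notin> I"
  shows "C \<in> Tset I n"
  proof -
    have n1: "n - 1 \<in> {1..n}" using n2 by auto
    define a where "a = C(n - 1 := 0)"
    have Csupp: "\<forall>j. (j < 1 \<or> n < j) \<longrightarrow> C j = 0" using C(1) unfolding mons_def mem_Collect_eq .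
    have asupp: "\<forall>j. (j < 1 \<or> n - 2 < j) \<longrightarrow> a j = 0"
    proof (intro allI impI)
      fix j assume "j < 1 \<or> n - 2 < j"
      then consider "j < 1" | "j = n - 1" | "j = n" | "n < j" using n2 by linarith
      then show "a j = 0"
      proof cases
        case 1 then show ?thesis unfolding a_def using Csupp n2 by auto
      next
        case 2 then show ?thesis unfolding a_def by simp
      next
        case 3 then show ?thesis unfolding a_def using C(2) n2 by simp
      next
        case 4 then show ?thesis unfolding a_def using Csupp n2 by auto
      qed
    qed
    have ag: "\<forall>j\<in>{1..n - 2}. a j < fI I j a"
    proof
      fix j assume j: "j \<in> {1..n - 2}"
      have jn: "j \<in> {1..n}" using j by auto
      have ak: "\<forall>k. 1 \<le> k \<and> k < j \<longrightarrow> a k = C k" unfolding a_def using j by auto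
      have "C j < fI I j a"
        using fI_gt[OF Iideal C(1) C(3) jn xjt[of j] ak] j by auto
      then show "a j < fI I j a" unfolding a_def using j n2 by auto
    qed
    have ak: "\<forall>k. 1 \<le> k \<and> k < n - 1 \<longrightarrow> a k = C k" unfolding a_def by auto
    have "C (n - 1) < fI I (n - 1) a"
      using fI_gt[OF Iideal C(1) C(3) n1 xjt[of "n - 1"] ak] n2 by auto
    moreover have "a \<in> Iset I (n - 2)" unfolding Iset_def using asupp ag by auto
    moreover have "C = a(n - 1 := C (n - 1))" unfolding a_def by auto
    ultimately show ?thesis unfolding Tset_def by blast
  qed


theorem lemma3p7:
  fixes n t s :: nat and I :: "(nat \<Rightarrow> nat) set"
    and A :: "nat \<Rightarrow> (nat \<Rightarrow> nat)" and g :: "(nat \<Rightarrow> nat) \<Rightarrow> nat"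
  assumes n2: "2 \<le> n"
    and Iideal: "is_monomial_ideal n I"
    and arl: "almost_revlex n I"
    and tpos: "0 < t"
    and last: "is_last_gen n I (\<lambda>j. t * unitv (n - 1) j)"
    and spos: "0 < s"
    and sT: "s \<le> card (Tset I n)"
    and AT: "\<forall>i\<in>{1..s}. A i \<in> Tset I n"
    and Adec: "\<forall>i\<in>{1..s}. \<forall>j\<in>{1..s}. i < j \<longrightarrow> revlex_less n (A j) (A i)"
    and Alargest: "\<forall>B\<in>Tset I n - A ` {1..s}. revlex_less n B (A s)"
    and gpos: "\<forall>i\<in>{1..s}. 0 < g (A i)"
    and gt: "\<forall>i\<in>{1..s}. t \<le> mdeg n (A i) + g (A i)"
    and gmono: "\<forall>i\<in>{1..s}. \<forall>j\<in>{1..s}. revlex_less n (A j) (A i) \<longrightarrow>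
                  mdeg n (A i) + g (A i) \<le> mdeg n (A j) + g (A j)"
  shows "almost_revlex n (mideal_gen n (mingens I \<union> {(\<lambda>j. A i j + g (A i) * unitv n j) | i. i \<in> {1..s}}))
       \<and> mingens (mideal_gen n (mingens I \<union> {(\<lambda>j. A i j + g (A i) * unitv n j) | i. i \<in> {1..s}}))
         = mingens I \<union> {(\<lambda>j. A i j + g (A i) * unitv n j) | i. i \<in> {1..s}}"
proof -
  define L where "L = (\<lambda>j. t * unitv (n - 1) j)"
  define E where "E = (\<lambda>i j. A i j + g (A i) * unitv n j)"
  define S where "S = mingens I \<union> {(\<lambda>j. A i j + g (A i) * unitv n j) | i. i \<in> {1..s}}"
  define J where "J = mideal_gen n S"
  have SE: "S = mingens I \<union> E ` {1..s}" unfolding S_def E_def by auto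
  have Imons: "I \<subseteq> mons n" and Iclos: "\<And>a b. a \<in> I \<Longrightarrow> b \<in> mons n \<Longrightarrow> mdvd a b \<Longrightarrow> b \<in> I"
    using Iideal unfolding is_monomial_ideal_def by auto
  have mgI: "mingens I \<subseteq> I" unfolding mingens_def by auto
  have Lmin: "L \<in> mingens I" using last unfolding is_last_gen_def L_def by auto
  have n1: "n - 1 \<in> {1..n}" using n2 by auto
  have degL: "mdeg n L = t" unfolding L_def using mdeg_unit[OF n1] .
  have Ln: "L n = 0" unfolding L_def unitv_def using n2 by auto
  have Lmax: "\<forall>N\<in>mingens I. mdeg n N \<le> t"
    using last degL unfolding is_last_gen_def L_def by auto
  have Llast: "\<forall>N\<in>mingens I. mdeg n N = t \<longrightarrow> N = L \<or> revlex_less n L N"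
    using last degL unfolding is_last_gen_def L_def by auto
  have noxn: "N n = 0" if N: "N \<in> mingens I" for N
  proof (rule ccontr)
    assume "N n \<noteq> 0"
    then have Nn: "0 < N n" by simp
    have "mdeg n N \<le> t" using Lmax N by auto
    then consider "mdeg n N = t" | "mdeg n N < t" by linarith
    then show False
    proof cases
      case 1
      have "N \<noteq> L" using Nn Ln by auto
      then have "revlex_less n L N" using Llast N 1 by auto
      then obtain \<sigma> where s: "\<sigma> \<in> {1..n}" "\<forall>r\<in>{1..n}. \<sigma> < r \<longrightarrow> N r = L r" "N \<sigma> < L \<sigma>"
        using 1 degL unfolding revlex_less_def by auto
      show False
      proof (cases "\<sigma> = n")
        case True then show ?thesis using s Ln by auto
      next
        case False then have "\<sigma> < n" using s by auto
        then show ?thesis using s(2) Ln Nn n2 by auto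
      qed
    next
      case 2
      define d where "d = mdeg n N"
      define M where "M = (\<lambda>k. d * unitv (n - 1) k)"
      have Mm: "M \<in> mons n" unfolding M_def mons_def unitv_def using n2 by auto
      have dM: "mdeg n M = d" unfolding M_def using mdeg_unit[OF n1] .
      have Mn: "M n = 0" unfolding M_def unitv_def using n2 by auto
      have "revlex_less n N M" unfolding revlex_less_def
        using dM d_def Mn Nn n2 by (intro disjI2 conjI bexI[of _ n]) auto
      then have "M \<in> I" using arl Mm N dM d_def unfolding almost_revlex_def by auto
      moreover have "mdvd M L" unfolding M_def L_def mdvd_def using 2 d_def by auto
      moreover have "M \<noteq> L"
      proof
        assume "M = L"
        then have "M (n - 1) = L (n - 1)" by simp
        then show False unfolding M_def L_def unitv_def using 2 d_def by auto
      qed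
      ultimately show False using Lmin unfolding mingens_def by auto
    qed
  qed
  have xjt: "(\<lambda>k. t * unitv j k) \<in> I" if j: "j \<in> {1..n-1}" for j
  proof (cases "j = n - 1")
    case True then show ?thesis using Lmin mgI unfolding L_def by auto
  next
    case False
    then have jl: "j < n - 1" using j by auto
    define M where "M = (\<lambda>k. t * unitv j k)"
    have jn: "j \<in> {1..n}" using j by auto
    have Mm: "M \<in> mons n" unfolding M_def mons_def unitv_def using j by auto
    have dM: "mdeg n M = t" unfolding M_def using mdeg_unit[OF jn] .
    have "revlex_less n L M" unfolding revlex_less_def
    proof (intro disjI2 conjI bexI[of _ "n - 1"])
      show "mdeg n L = mdeg n M" using dM degL by simp
      show "M (n - 1) \<noteq> L (n - 1)" "M (n - 1) < L (n - 1)"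
        unfolding M_def L_def unitv_def using jl tpos by auto
      show "\<forall>r\<in>{1..n}. n - 1 < r \<longrightarrow> M r = L r"
        unfolding M_def L_def unitv_def using jl by auto
      show "n - 1 \<in> {1..n}" using n1 .
    qed
    then show ?thesis using arl Mm Lmin dM degL unfolding almost_revlex_def M_def by auto
  qed
  have Tprops: "C \<in> mons n \<and> C n = 0 \<and> C \<notin> I" if C: "C \<in> Tset I n" for C
    using Tprops[OF n2 C] .
  have notinT: "C \<in> Tset I n" if C: "C \<in> mons n" "C n = 0" "C \<notin> I" for C
    using notinT[OF n2 Iideal xjt C] by blast
  have Ai: "A i \<in> mons n \<and> A i n = 0 \<and> A i \<notin> I" if "i \<in> {1..s}" for i
    using Tprops AT that by auto
  have Eprops: "E i \<in> mons n \<and> E i n = g (A i) \<and> (\<forall>k. k \<noteq> n \<longrightarrow> E i k = A i k)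
      \<and> mdeg n (E i) = mdeg n (A i) + g (A i)" if i: "i \<in> {1..s}" for i
  proof -
    have "E i \<in> mons n" using Ai[OF i] n2 unfolding E_def mons_def unitv_def by auto
    moreover have "E i n = g (A i)" using Ai[OF i] unfolding E_def unitv_def by auto
    moreover have "\<forall>k. k \<noteq> n \<longrightarrow> E i k = A i k" unfolding E_def unitv_def by auto
    moreover have "mdeg n (E i) = mdeg n (A i) + g (A i)" unfolding E_def
      using mdeg_add_unit[of n "A i" "g (A i)"] n2 by auto
    ultimately show ?thesis by blast
  qed
  have Smons: "S \<subseteq> mons n" using SE Imons mgI Eprops by auto
  have pw: "\<forall>x\<in>S. \<forall>y\<in>S. mdvd y x \<longrightarrow> y = x"
  proof (intro ballI impI)
    fix x y assume x: "x \<in> S" and y: "y \<in> S" and d: "mdvd y x"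
    show "y = x"
    proof (cases "x \<in> mingens I")
      case xI: True
      show ?thesis
      proof (cases "y \<in> mingens I")
        case True then show ?thesis using xI d mgI unfolding mingens_def by auto
      next
        case False
        then obtain i where i: "i \<in> {1..s}" "y = E i" using y SE by auto
        have "y n \<le> x n" using d unfolding mdvd_def by auto
        moreover have "0 < g (A i)" using gpos i(1) by blast
        moreover have "y n = g (A i)" using Eprops[OF i(1)] i(2) by simp
        ultimately show ?thesis using noxn[OF xI] by simp
      qed
    next
      case False
      then obtain i where i: "i \<in> {1..s}" "x = E i" using x SE by auto
      show ?thesis
      proof (cases "y \<in> mingens I")
        case yI: True
        have "mdvd y (A i)" unfolding mdvd_def
        proof
          fix k show "y k \<le> A i k"
          proof (cases "k = n")
            case True then show ?thesis using noxn[OF yI] by simp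
          next
            case False then show ?thesis using d i Eprops[OF i(1)] unfolding mdvd_def by metis
          qed
        qed
        then have "A i \<in> I" using Iclos yI mgI Ai[OF i(1)] by auto
        then show ?thesis using Ai[OF i(1)] by auto
      next
        case False
        then obtain j where j: "j \<in> {1..s}" "y = E j" using y SE by auto
        show ?thesis
        proof (cases "A j = A i")
          case True then show ?thesis using i j unfolding E_def by auto
        next
          case ne: False
          have dv: "mdvd (A j) (A i)" unfolding mdvd_def
          proof
            fix k show "A j k \<le> A i k"
            proof (cases "k = n")
              case True then show ?thesis using Ai[OF i(1)] Ai[OF j(1)] by simp
            next
              case False then show ?thesis using d i j Eprops[OF i(1)] Eprops[OF j(1)]
                unfolding mdvd_def by metis
            qed
          qed
          have lt: "mdeg n (A j) < mdeg n (A i)"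
            using mdeg_less[OF _ _ dv ne] Ai[OF i(1)] Ai[OF j(1)] by auto
          then have "revlex_less n (A j) (A i)" unfolding revlex_less_def by auto
          then have "mdeg n (A i) + g (A i) \<le> mdeg n (A j) + g (A j)" using gmono i j by auto
          moreover have "y n \<le> x n" using d unfolding mdvd_def by auto
          ultimately show ?thesis using lt Eprops[OF i(1)] Eprops[OF j(1)] i j by auto
        qed
      qed
    qed
  qed
  have mgJ: "mingens J = S" unfolding J_def using mingens_gen[OF Smons pw] .
  have IJ: "I \<subseteq> J"
  proof
    fix x assume x: "x \<in> I"
    then obtain b where "b \<in> mingens I" "mdvd b x" using ideal_mingens[OF Iideal] by blast
    then show "x \<in> J" unfolding J_def mideal_gen_def S_def using x Imons by auto
  qed
  have arJ: "almost_revlex n J" unfolding almost_revlex_def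
  proof (intro ballI impI)
    fix M N assume M: "M \<in> mons n" and N: "N \<in> mingens J" and MN: "mdeg n M = mdeg n N \<and> revlex_less n N M"
    show "M \<in> J"
    proof (cases "N \<in> mingens I")
      case True
      then have "M \<in> I" using arl M MN unfolding almost_revlex_def by auto
      then show ?thesis using IJ by auto
    next
      case False
      then obtain i where i: "i \<in> {1..s}" "N = E i" using N mgJ SE by auto
      define C where "C = M(n := 0)"
      define c where "c = M n"
      have MC: "M = (\<lambda>j. C j + c * unitv n j)" unfolding C_def c_def unitv_def by auto
      have Cm: "C \<in> mons n" using M unfolding C_def mons_def by auto
      have Cn: "C n = 0" unfolding C_def by simp
      have CM: "mdvd C M" unfolding C_def mdvd_def by auto
      have degM: "mdeg n M = mdeg n C + c" using MC mdeg_add_unit[of n C c] n2 by auto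
      show ?thesis
      proof (cases "C \<in> I")
        case True
        then have "M \<in> I" using Iclos M CM by auto
        then show ?thesis using IJ by auto
      next
        case CI: False
        have CT: "C \<in> Tset I n" using notinT Cm Cn CI by auto
        have degN: "mdeg n N = mdeg n (A i) + g (A i)" using Eprops[OF i(1)] i by auto
        obtain \<sigma> where s: "\<sigma> \<in> {1..n}" "\<forall>r\<in>{1..n}. \<sigma> < r \<longrightarrow> M r = N r" "M \<sigma> < N \<sigma>"
          using MN unfolding revlex_less_def by auto
        have key: "c \<le> g (A i) \<and> revlex_less n (A i) C"
        proof (cases "\<sigma> = n")
          case True
          then have "c < g (A i)" using s Eprops[OF i(1)] i unfolding c_def by auto
          then show ?thesis using degM degN MN unfolding revlex_less_def by auto
        next
          case False
          then have sn: "\<sigma> < n" using s by auto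
          have "M n = N n" using s(2) sn n2 by auto
          then have ceq: "c = g (A i)" using Eprops[OF i(1)] i unfolding c_def by auto
          have "revlex_less n (A i) C" unfolding revlex_less_def
          proof (intro disjI2 conjI bexI[of _ \<sigma>])
            show "mdeg n (A i) = mdeg n C" using degM degN MN ceq by auto
            have "C \<sigma> = M \<sigma>" "A i \<sigma> = N \<sigma>" unfolding C_def using sn i Eprops[OF i(1)] by auto
            then show "C \<sigma> < A i \<sigma>" "C \<sigma> \<noteq> A i \<sigma>" using s(3) by auto
            show "\<forall>r\<in>{1..n}. \<sigma> < r \<longrightarrow> C r = A i r"
            proof (intro ballI impI)
              fix r assume r: "r \<in> {1..n}" "\<sigma> < r"
              show "C r = A i r"
              proof (cases "r = n")
                case True then show ?thesis using Cn Ai[OF i(1)] by simp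
              next
                case False then show ?thesis using s(2) r i Eprops[OF i(1)] unfolding C_def by auto
              qed
            qed
            show "\<sigma> \<in> {1..n}" using s(1) .
          qed
          then show ?thesis using ceq by auto
        qed
        have "C \<in> A ` {1..s}"
        proof (rule ccontr)
          assume "C \<notin> A ` {1..s}"
          then have "revlex_less n C (A s)" using Alargest CT by auto
          then have lt: "revlex_less n (A i) (A s)" using key revlex_trans by blast
          show False
          proof (cases "i = s")
            case True then show ?thesis using lt revlex_irrefl by metis
          next
            case False
            then have "revlex_less n (A s) (A i)" using Adec i spos by auto
            then show ?thesis using lt revlex_trans revlex_irrefl by metis
          qed
        qed
        then obtain j where j: "j \<in> {1..s}" "C = A j" by auto
        have "mdeg n (A j) + g (A j) \<le> mdeg n (A i) + g (A i)"
          using gmono i j key by auto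
        then have gj: "g (A j) \<le> c" using degM degN MN j by auto
        have "mdvd (E j) M" unfolding mdvd_def
        proof
          fix k show "E j k \<le> M k"
          proof (cases "k = n")
            case True then show ?thesis using gj Eprops[OF j(1)] unfolding c_def by auto
          next
            case False
            then have "E j k = A j k" using Eprops[OF j(1)] by simp
            also have "\<dots> = C k" using j(2) by simp
            also have "\<dots> = M k" using False unfolding C_def by simp
            finally show ?thesis by simp
          qed
        qed
        moreover have "E j \<in> S" using SE j by auto
        ultimately show ?thesis unfolding J_def mideal_gen_def using M by auto
      qed
    qed
  qed
  show ?thesis using arJ mgJ unfolding J_def S_def by auto
qed

end
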